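(* Let $k\ge3$ be odd, $p\in[0,1]$ and $q\in[0,1]$, and consider the mean-field Node-Majority process on the infinite tree $\mathcal T$ with root $v_0$ started from i.i.d. initial states with $\Pr(x_v^{(0)}=\mathcal R)=q$. Then $$\lim_{t\to\infty}\Pr(x_{v_0}^{(t)}=\mathcal R)=\begin{cases}\hat\varphi^+_{p,k} & \text{if } p<p_k^\star \text{ and } q>\hat\varphi^-_{p,k},\\ 0 & \text{if } p<p_k^\star\text{ and } q<\hat\varphi^-_{p,k},\\ 0 & \text{if } p>p_k^\star.\end{cases}$$
   Context: $\mathcal T$ is the infinite rooted tree with root $v_0$ in which every vertex has exactly $k$ children. Each vertex $v$ has a state $x_v^{(t)}\in\{\mathcal R,\mathcal B\}$ at each round $t\in\mathbb N_0$. At $t=0$ each vertex is $\mathcal R$ with probability $q$ independently. For $t\ge0$, each vertex $v$ independently of everything else becomes $\mathcal B$ at round $t+1$ with probability $p$; otherwise $x_v^{(t+1)}$ is the majority among the states $x_w^{(t)}$ of its $k$ children. Let $F_{p,k}(x)=\Pr[\mathrm{Bin}(k,(1-p)x)\ge(k+1)/2]$ and $\widehat F_{p,k}(x)=(1-p)\Pr[\mathrm{Bin}(k,x)\ge(k+1)/2]$ for $x\in[0,1]$. $p_k^\star\in[1/9,1/2)$ is the (unique) value such that for $0\le p<p_k^\star$ the equation $F_{p,k}(x)=x$ on $[0,1]$ has exactly three solutions, for $p=p_k^\star$ exactly two, and for $p>p_k^\star$ only $0$. For $0\le p<p_k^\star$ the equation $\widehat F_{p,k}(x)=x$ on $[0,1]$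 has exactly three solutions $0<\hat\varphi^-_{p,k}<\hat\varphi^+_{p,k}$. *)

theory Defs
  imports "HOL-Probability.Probability"
begin

definition maj_prob :: "nat \<Rightarrow> real \<Rightarrow> real" where
  "maj_prob k x = measure_pmf.prob (binomial_pmf k x) {j. 2 * j \<ge> k + 1}"

definition F_map :: "real \<Rightarrow> nat \<Rightarrow> real \<Rightarrow> real" where
  "F_map p k x = maj_prob k ((1 - p) * x)"

definition Fhat_map :: "real \<Rightarrow> nat \<Rightarrow> real \<Rightarrow> real" where
  "Fhat_map p k x = (1 - p) * maj_prob k x"

definition fixpts_F :: "real \<Rightarrow> nat \<Rightarrow> real set" where
  "fixpts_F p k = {x \<in> {0..1}. F_map p k x = x}"

definition fixpts_Fhat :: "real \<Rightarrow> nat \<Rightarrow> real set" where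
  "fixpts_Fhat p k = {x \<in> {0..1}. Fhat_map p k x = x}"

definition pstar :: "nat \<Rightarrow> real" where
  "pstar k = (THE ps. 1/9 \<le> ps \<and> ps < 1/2
      \<and> (\<forall>p. 0 \<le> p \<and> p < ps \<longrightarrow> card (fixpts_F p k) = 3)
      \<and> card (fixpts_F ps k) = 2
      \<and> (\<forall>p. ps < p \<and> p \<le> 1 \<longrightarrow> fixpts_F p k = {0}))"

text \<open>The three fixed points 0 < phi_minus < phi_plus of Fhat (for p < pstar).\<close>
definition phi_minus :: "real \<Rightarrow> nat \<Rightarrow> real" where
  "phi_minus p k = sorted_list_of_set (fixpts_Fhat p k) ! 1"

definition phi_plus :: "real \<Rightarrow> nat \<Rightarrow> real" where
  "phi_plus p k = sorted_list_of_set (fixpts_Fhat p k) ! 2"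

text \<open>Vertices of the k-ary tree are lists of child indices (< k),
  root = []; children of v are i # v for i < k. The randomness is a family of
  independent bits: \<omega> (Inl v) = initial state of v is Red;
  \<omega> (Inr (v,t)) = v is forced to Blue at round t+1. State True = Red.\<close>

type_synonym nm_omega = "(nat list + nat list \<times> nat) \<Rightarrow> bool"

definition nm_space :: "real \<Rightarrow> real \<Rightarrow> nm_omega measure" where
  "nm_space p q = PiM UNIV (\<lambda>i. case i of
       Inl _ \<Rightarrow> measure_pmf (bernoulli_pmf q)
     | Inr _ \<Rightarrow> measure_pmf (bernoulli_pmf p))"

primrec nm_state :: "nat \<Rightarrow> nm_omega \<Rightarrow> nat \<Rightarrow> nat list \<Rightarrow> bool" where
  "nm_state k \<omega> 0 v = \<omega> (Inl v)"
| "nm_state k \<omega> (Suc t) v =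
     (\<not> \<omega> (Inr (v, t)) \<and> 2 * card {i. i < k \<and> nm_state k \<omega> t (i # v)} \<ge> k + 1)"

definition root_red_prob :: "nat \<Rightarrow> real \<Rightarrow> real \<Rightarrow> nat \<Rightarrow> real" where
  "root_red_prob k p q t =
     measure (nm_space p q) {\<omega> \<in> space (nm_space p q). nm_state k \<omega> t []}"

end

theory Submission
  imports Defs
begin


definition Dset :: "nat \<Rightarrow> nat list \<Rightarrow> (nat list + nat list \<times> nat) set" where
  "Dset t v = {Inl (u @ v) | u. length u = t} \<union> {Inr (u @ v, s) | u s. length u + s + 1 = t}"

lemma Dset_Inr: "Inr (v, t) \<in> Dset (Suc t) v"
  unfolding Dset_def by force

lemma Dset_child: "Dset t (i # v) \<subseteq> Dset (Suc t) v"
proof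
  fix x assume "x \<in> Dset t (i # v)"
  then consider u where "x = Inl (u @ i # v)" "length u = t"
    | u s where "x = Inr (u @ i # v, s)" "length u + s + 1 = t"
    unfolding Dset_def by blast
  then show "x \<in> Dset (Suc t) v"
  proof cases
    case 1 then show ?thesis unfolding Dset_def
      by (intro UnI1 CollectI exI[of _ "u @ [i]"]) auto
  next
    case 2 then show ?thesis unfolding Dset_def
      by (intro UnI2 CollectI exI[of _ "u @ [i]"] exI[of _ s]) auto
  qed
qed

lemma Dset_0: "Inl v \<in> Dset 0 v"
  unfolding Dset_def by auto

lemma nm_state_local:
  "(\<And>x. x \<in> Dset t v \<Longrightarrow> \<omega> x = \<omega>' x) \<Longrightarrow> nm_state k \<omega> t v = nm_state k \<omega>' t v"
proof (induction t arbitrary: v)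
  case 0 then show ?case using Dset_0 by simp
next
  case (Suc t)
  have "nm_state k \<omega> t (i # v) = nm_state k \<omega>' t (i # v)" for i
    using Suc.IH Suc.prems Dset_child by blast
  moreover have "\<omega> (Inr (v, t)) = \<omega>' (Inr (v, t))" using Suc.prems Dset_Inr by blast
  ultimately show ?case by simp
qed

lemma Dset_disj: "i \<noteq> j \<Longrightarrow> Dset t (i # v) \<inter> Dset t (j # v) = {}"
  unfolding Dset_def by auto

lemma Dset_Inr_notin: "Inr (v, t) \<notin> Dset t (i # v)"
  unfolding Dset_def by auto

lemma pred_card:
  fixes k :: nat
  assumes "\<And>i. i < k \<Longrightarrow> Measurable.pred M (P i)"
  shows "Measurable.pred M (\<lambda>x. Q (card {i. i < k \<and> P i x}))"
proof -
  have eq: "(\<lambda>x. Q (card {i. i < k \<and> P i x})) =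
     (\<lambda>x. \<exists>S\<in>Pow {..<k}. Q (card S) \<and> (\<forall>i\<in>{..<k}. P i x = (i \<in> S)))"
  proof (rule ext, rule iffI)
    fix x assume "Q (card {i. i < k \<and> P i x})"
    then show "\<exists>S\<in>Pow {..<k}. Q (card S) \<and> (\<forall>i\<in>{..<k}. P i x = (i \<in> S))"
      by (intro bexI[of _ "{i. i < k \<and> P i x}"]) auto
  next
    fix x assume "\<exists>S\<in>Pow {..<k}. Q (card S) \<and> (\<forall>i\<in>{..<k}. P i x = (i \<in> S))"
    then obtain S where "S \<subseteq> {..<k}" "Q (card S)" "\<forall>i\<in>{..<k}. P i x = (i \<in> S)" by auto
    moreover then have "{i. i < k \<and> P i x} = S" by auto
    ultimately show "Q (card {i. i < k \<and> P i x})" by simp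
  qed
  show ?thesis unfolding eq
  proof (rule pred_intros_finite(4), simp)
    fix S assume "S \<in> Pow {..<k}"
    show "Measurable.pred M (\<lambda>x. Q (card S) \<and> (\<forall>i\<in>{..<k}. P i x = (i \<in> S)))"
    proof (rule pred_intros_logic(3))
      show "Measurable.pred M (\<lambda>x. \<forall>i\<in>{..<k}. P i x = (i \<in> S))"
        by (rule pred_intros_finite(3)) (auto intro!: pred_intros_logic(6) assms)+
    qed simp
  qed
qed

definition NMf :: "real \<Rightarrow> real \<Rightarrow> (nat list + nat list \<times> nat) \<Rightarrow> bool measure" where
  "NMf p q = (\<lambda>i. case i of
       Inl _ \<Rightarrow> measure_pmf (bernoulli_pmf q)
     | Inr _ \<Rightarrow> measure_pmf (bernoulli_pmf p))"

lemma nm_space_eq: "nm_space p q = PiM UNIV (NMf p q)"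
  unfolding nm_space_def NMf_def by simp

lemma NMf_prob: "prob_space (NMf p q i)"
  unfolding NMf_def by (cases i) (auto intro: prob_space_measure_pmf)

lemma sets_NMf: "sets (NMf p q i) = UNIV"
  unfolding NMf_def by (cases i) auto

lemma comp_pred:
  assumes "i \<in> K"
  shows "Measurable.pred (PiM K (NMf p q)) (\<lambda>\<omega>. \<omega> i)"
proof -
  have "(\<lambda>\<omega>. \<omega> i) \<in> measurable (PiM K (NMf p q)) (NMf p q i)"
    using assms by (rule measurable_component_singleton)
  then show ?thesis
    by (subst measurable_cong_sets[OF refl, of _ "NMf p q i"]) (auto simp: sets_NMf)
qed

lemma nm_state_pred:
  "Dset t v \<subseteq> K \<Longrightarrow> Measurable.pred (PiM K (NMf p q)) (\<lambda>\<omega>. nm_state k \<omega> t v)"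
proof (induction t arbitrary: v)
  case 0
  have "Inl v \<in> K" using 0 Dset_0 by blast
  then show ?case by (simp add: comp_pred)
next
  case (Suc t)
  have c: "Measurable.pred (PiM K (NMf p q)) (\<lambda>\<omega>. nm_state k \<omega> t (i # v))" for i
    using Suc.IH Suc.prems Dset_child by blast
  have r: "Measurable.pred (PiM K (NMf p q)) (\<lambda>\<omega>. \<omega> (Inr (v, t)))"
    using Suc.prems Dset_Inr comp_pred by blast
  show ?case
    by (simp only: nm_state.simps, intro pred_intros_logic(2,3) r pred_card c)
qed

lemma indep_coords:
  "prob_space.indep_vars (nm_space p q) (NMf p q) (\<lambda>i \<omega>. \<omega> i) UNIV"
proof -
  interpret P: prob_space "nm_space p q"
    unfolding nm_space_eq by (rule prob_space_PiM) (rule NMf_prob)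
  show ?thesis
  proof (subst P.indep_vars_iff_distr_eq_PiM)
    fix i show "(\<lambda>\<omega>. \<omega> i) \<in> measurable (nm_space p q) (NMf p q i)"
      using measurable_component_singleton[of i UNIV "NMf p q"] by (simp add: nm_space_eq)
  next
    show "distr (nm_space p q) (PiM UNIV (NMf p q)) (\<lambda>x. \<lambda>i\<in>UNIV. x i) =
      PiM UNIV (\<lambda>i. distr (nm_space p q) (NMf p q i) (\<lambda>x. x i))"
    proof -
      have 1: "(\<lambda>x. restrict x UNIV) = (\<lambda>x. x)" by (auto simp: restrict_def)
      have 2: "(\<lambda>i. distr (PiM UNIV (NMf p q)) (NMf p q i) (\<lambda>x. x i)) = NMf p q"
        by (rule ext, rule distr_PiM_component[OF NMf_prob]) simp
      show ?thesis unfolding nm_space_eq 1 2 by simp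
    qed
  qed simp
qed

lemma maj_prob_sum:
  assumes "0 \<le> r" "r \<le> 1"
  shows "maj_prob k r = (\<Sum>c\<in>{c. c \<le> k \<and> k + 1 \<le> 2 * c}. real (k choose c) * r ^ c * (1 - r) ^ (k - c))"
proof -
  let ?B = "binomial_pmf k r"
  let ?A = "{j. 2 * j \<ge> k + 1}"
  have sub: "set_pmf ?B \<subseteq> {..k}"
    using assms by (auto simp: set_pmf_binomial_eq)
  have "maj_prob k r = measure (measure_pmf ?B) (?A \<inter> set_pmf ?B)"
    unfolding maj_prob_def by (simp add: measure_Int_set_pmf)
  also have "?A \<inter> set_pmf ?B = (?A \<inter> {..k}) \<inter> set_pmf ?B" using sub by auto
  also have "measure (measure_pmf ?B) \<dots> = measure (measure_pmf ?B) (?A \<inter> {..k})"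
    by (simp add: measure_Int_set_pmf)
  also have "\<dots> = sum (pmf ?B) (?A \<inter> {..k})"
    by (rule measure_measure_pmf_finite) simp
  also have "?A \<inter> {..k} = {c. c \<le> k \<and> k + 1 \<le> 2 * c}" by auto
  finally show ?thesis using assms by simp
qed

lemma nm_step:
  assumes p: "0 \<le> p" "p \<le> 1" and r: "0 \<le> r" "r \<le> 1"
    and hyp: "\<And>u. measure (nm_space p q) {\<omega> \<in> space (nm_space p q). nm_state k \<omega> t u} = r"
  shows "measure (nm_space p q) {\<omega> \<in> space (nm_space p q). nm_state k \<omega> (Suc t) v}
           = (1 - p) * maj_prob k r"
proof -
  interpret P: prob_space "nm_space p q"
    unfolding nm_space_eq by (rule prob_space_PiM) (rule NMf_prob)
  define K where "K j = (if j < k then Dset t (j # v) else {Inr (v, t)})" for j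
  define Y where "Y j = (if j < k then (\<lambda>r. nm_state k r t (j # v)) else (\<lambda>r. r (Inr (v, t))))" for j
  define W where "W j \<omega> = (if j < k then nm_state k \<omega> t (j # v) else \<omega> (Inr (v, t)))" for j \<omega>
  have disj: "disjoint_family_on K {..k}"
    unfolding disjoint_family_on_def K_def using Dset_disj Dset_Inr_notin by auto
  have ind1: "P.indep_vars (\<lambda>j. PiM (K j) (NMf p q)) (\<lambda>j \<omega>. restrict (\<lambda>i. \<omega> i) (K j)) {..k}"
    by (rule P.indep_vars_restrict[OF indep_coords _ disj]) simp
  have ind2: "P.indep_vars (\<lambda>_. count_space UNIV) (\<lambda>j \<omega>. Y j (restrict (\<lambda>i. \<omega> i) (K j))) {..k}"
  proof (rule P.indep_vars_compose2[OF ind1])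
    fix j assume "j \<in> {..k}"
    show "Y j \<in> measurable (PiM (K j) (NMf p q)) (count_space UNIV)"
    proof (cases "j < k")
      case True then show ?thesis unfolding Y_def K_def by (simp add: nm_state_pred)
    next
      case False then show ?thesis unfolding Y_def K_def by (simp add: comp_pred)
    qed
  qed
  have YW: "(\<lambda>\<omega>. Y j (restrict (\<lambda>i. \<omega> i) (K j))) = W j" for j
  proof
    fix \<omega>
    show "Y j (restrict (\<lambda>i. \<omega> i) (K j)) = W j \<omega>"
    proof (cases "j < k")
      case True then show ?thesis unfolding Y_def K_def W_def
        by simp (rule nm_state_local, simp)
    next
      case False then show ?thesis unfolding Y_def K_def W_def by simp
    qed
  qed
  have ind: "P.indep_vars (\<lambda>_. count_space UNIV) W {..k}"
    using ind2 unfolding YW .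
  have predW: "Measurable.pred (nm_space p q) (W j)" for j
    unfolding W_def nm_space_eq
    by (cases "j < k") (auto intro: nm_state_pred comp_pred)
  have evW: "W j -` {b} \<inter> space (nm_space p q) \<in> P.events" for j b
  proof -
    have "W j -` {b} \<inter> space (nm_space p q) = {\<omega> \<in> space (nm_space p q). W j \<omega> = b}" by auto
    also have "\<dots> \<in> P.events" using predW[of j] by (cases b) (auto simp: pred_def)
    finally show ?thesis .
  qed
  have compl: "W j -` {False} \<inter> space (nm_space p q) = space (nm_space p q) - (W j -` {True} \<inter> space (nm_space p q))" for j
    by auto
  have wp: "P.prob (W j -` {b} \<inter> space (nm_space p q)) = (if b then r else 1 - r)" if "j < k" for j b
  proof -
    have T: "P.prob (W j -` {True} \<inter> space (nm_space p q)) = r"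
    proof -
      have "W j -` {True} \<inter> space (nm_space p q) = {\<omega> \<in> space (nm_space p q). nm_state k \<omega> t (j # v)}"
        using that unfolding W_def by auto
      then show ?thesis using hyp by simp
    qed
    show ?thesis
    proof (cases b)
      case True then show ?thesis using T by simp
    next
      case False then show ?thesis using T compl[of j] P.prob_compl[OF evW[of j True]] by simp
    qed
  qed
  have wk: "P.prob (W k -` {b} \<inter> space (nm_space p q)) = (if b then p else 1 - p)" for b
  proof -
    have T: "P.prob (W k -` {True} \<inter> space (nm_space p q)) = p"
    proof -
      have "W k -` {True} \<inter> space (nm_space p q) = (\<lambda>\<omega>. \<omega> (Inr (v, t))) -` {True} \<inter> space (nm_space p q)"
        unfolding W_def by auto
      also have "P.prob \<dots> = measure (distr (nm_space p q) (NMf p q (Inr (v, t))) (\<lambda>\<omega>. \<omega> (Inr (v, t)))) {True}"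
        by (rule measure_distr[symmetric]) (auto simp: nm_space_eq sets_NMf measurable_component_singleton)
      also have "distr (nm_space p q) (NMf p q (Inr (v, t))) (\<lambda>\<omega>. \<omega> (Inr (v, t))) = NMf p q (Inr (v, t))"
        unfolding nm_space_eq by (rule distr_PiM_component[OF NMf_prob]) simp
      also have "measure \<dots> {True} = p" using p by (simp add: NMf_def measure_pmf_single)
      finally show ?thesis .
    qed
    show ?thesis
    proof (cases b)
      case True then show ?thesis using T by simp
    next
      case False then show ?thesis using T compl[of k] P.prob_compl[OF evW[of k True]] by simp
    qed
  qed
  define SS where "SS = {S. S \<subseteq> {..<k} \<and> k + 1 \<le> 2 * card S}"
  define b where "b S j = (j < k \<and> j \<in> S)" for S j
  define G where "G S = (\<Inter>j\<in>{..k}. W j -` {b S j} \<inter> space (nm_space p q))" for S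
  have finSS: "finite SS" unfolding SS_def by (rule finite_subset[of _ "Pow {..<k}"]) auto
  have E: "{\<omega> \<in> space (nm_space p q). nm_state k \<omega> (Suc t) v} = (\<Union>S\<in>SS. G S)"
  proof (rule set_eqI, rule iffI)
    fix \<omega> assume a: "\<omega> \<in> {\<omega> \<in> space (nm_space p q). nm_state k \<omega> (Suc t) v}"
    let ?S = "{i. i < k \<and> W i \<omega>}"
    have "?S = {i. i < k \<and> nm_state k \<omega> t (i # v)}" unfolding W_def by auto
    then have "?S \<in> SS" using a unfolding SS_def by auto
    moreover have "\<omega> \<in> G ?S" using a unfolding G_def b_def W_def by auto
    ultimately show "\<omega> \<in> (\<Union>S\<in>SS. G S)" by blast
  next
    fix \<omega> assume "\<omega> \<in> (\<Union>S\<in>SS. G S)"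
    then obtain S where S: "S \<in> SS" "\<omega> \<in> G S" by blast
    have sp: "\<omega> \<in> space (nm_space p q)" using S(2) unfolding G_def by auto
    have Wi: "W i \<omega> = b S i" if "i \<le> k" for i using S(2) that unfolding G_def by auto
    have "{i. i < k \<and> nm_state k \<omega> t (i # v)} = S"
    proof (rule set_eqI)
      fix i
      show "i \<in> {i. i < k \<and> nm_state k \<omega> t (i # v)} \<longleftrightarrow> i \<in> S"
        using Wi[of i] S(1) unfolding W_def b_def SS_def by (cases "i < k") auto
    qed
    moreover have "\<not> \<omega> (Inr (v, t))" using Wi[of k] unfolding W_def b_def by simp
    ultimately show "\<omega> \<in> {\<omega> \<in> space (nm_space p q). nm_state k \<omega> (Suc t) v}"
      using sp S(1) unfolding SS_def by simp
  qed
  have Gev: "G S \<in> P.events" for S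
    unfolding G_def using evW by (intro sets.finite_INT) auto
  have Gdisj: "disjoint_family_on G SS"
  unfolding disjoint_family_on_def proof (intro ballI impI)
    fix S S' assume "S \<in> SS" "S' \<in> SS" "S \<noteq> S'"
    then obtain i where i: "i < k" "(i \<in> S) \<noteq> (i \<in> S')" unfolding SS_def by blast
    show "G S \<inter> G S' = {}"
    proof (rule ccontr)
      assume "G S \<inter> G S' \<noteq> {}"
      then obtain \<omega> where "\<omega> \<in> G S" "\<omega> \<in> G S'" by blast
      then have "W i \<omega> = b S i" "W i \<omega> = b S' i" using i unfolding G_def by auto
      then show False using i unfolding b_def by auto
    qed
  qed
  have PG: "P.prob (G S) = (1 - p) * (r ^ card S * (1 - r) ^ (k - card S))" if "S \<in> SS" for S
  proof -
    have Sk: "S \<subseteq> {..<k}" using that unfolding SS_def by auto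
    have "P.prob (G S) = (\<Prod>j\<in>{..k}. P.prob (W j -` {b S j} \<inter> space (nm_space p q)))"
      unfolding G_def by (rule P.indep_varsD[OF ind]) auto
    also have "\<dots> = (\<Prod>j\<in>{..<k}. P.prob (W j -` {b S j} \<inter> space (nm_space p q))) * (1 - p)"
      by (simp add: lessThan_Suc_atMost[symmetric] wk b_def)
    also have "(\<Prod>j\<in>{..<k}. P.prob (W j -` {b S j} \<inter> space (nm_space p q)))
        = (\<Prod>j\<in>{..<k}. if j \<in> S then r else 1 - r)"
      by (rule prod.cong) (auto simp: wp b_def)
    also have "\<dots> = r ^ card S * (1 - r) ^ (k - card S)"
    proof -
      have "(\<Prod>j\<in>{..<k}. if j \<in> S then r else 1 - r) =
          (\<Prod>j\<in>{..<k} \<inter> {x. x \<in> S}. r) * (\<Prod>j\<in>{..<k} \<inter> - {x. x \<in> S}. 1 - r)"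
        by (rule prod.If_cases) simp
      also have "{..<k} \<inter> {x. x \<in> S} = S" using Sk by auto
      also have "{..<k} \<inter> - {x. x \<in> S} = {..<k} - S" by auto
      moreover have "card ({..<k} - S) = k - card S"
        using Sk by (simp add: card_Diff_subset finite_subset)
      ultimately show ?thesis by simp
    qed
    finally show ?thesis by simp
  qed
  have "P.prob {\<omega> \<in> space (nm_space p q). nm_state k \<omega> (Suc t) v} = (\<Sum>S\<in>SS. P.prob (G S))"
    unfolding E by (rule P.finite_measure_finite_Union[OF finSS _ Gdisj]) (auto intro: Gev)
  also have "\<dots> = (\<Sum>S\<in>SS. (1 - p) * (r ^ card S * (1 - r) ^ (k - card S)))"
    by (rule sum.cong) (auto simp: PG)
  also have "\<dots> = (1 - p) * (\<Sum>S\<in>SS. r ^ card S * (1 - r) ^ (k - card S))"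
    by (simp add: sum_distrib_left)
  also have "(\<Sum>S\<in>SS. r ^ card S * (1 - r) ^ (k - card S)) =
      (\<Sum>c\<in>{c. c \<le> k \<and> k + 1 \<le> 2 * c}. (\<Sum>S\<in>{S \<in> SS. card S = c}. r ^ card S * (1 - r) ^ (k - card S)))"
  proof (rule sum.group[symmetric, OF finSS])
    show "finite {c. c \<le> k \<and> k + 1 \<le> 2 * c}" by simp
    show "card ` SS \<subseteq> {c. c \<le> k \<and> k + 1 \<le> 2 * c}"
      unfolding SS_def using card_mono[of "{..<k}"] by fastforce
  qed
  also have "\<dots> = (\<Sum>c\<in>{c. c \<le> k \<and> k + 1 \<le> 2 * c}. real (k choose c) * r ^ c * (1 - r) ^ (k - c))"
  proof (rule sum.cong[OF refl])
    fix c assume c: "c \<in> {c. c \<le> k \<and> k + 1 \<le> 2 * c}"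
    have "{S \<in> SS. card S = c} = {S. S \<subseteq> {..<k} \<and> card S = c}"
      using c unfolding SS_def by auto
    then have "card {S \<in> SS. card S = c} = k choose c" using n_subsets[of "{..<k}" c] by simp
    moreover have "(\<Sum>S\<in>{S \<in> SS. card S = c}. r ^ card S * (1 - r) ^ (k - card S)) =
        (\<Sum>S\<in>{S \<in> SS. card S = c}. r ^ c * (1 - r) ^ (k - c))" by (rule sum.cong) auto
    ultimately show "(\<Sum>S\<in>{S \<in> SS. card S = c}. r ^ card S * (1 - r) ^ (k - card S)) =
        real (k choose c) * r ^ c * (1 - r) ^ (k - c)" by simp
  qed
  also have "\<dots> = maj_prob k r" using maj_prob_sum[OF r] by simp
  finally show ?thesis .
qed

lemma coord_prob:
  assumes "0 \<le> q" "q \<le> 1"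
  shows "measure (nm_space p q) {\<omega> \<in> space (nm_space p q). \<omega> (Inl v)} = q"
proof -
  have "{\<omega> \<in> space (nm_space p q). \<omega> (Inl v)} = (\<lambda>\<omega>. \<omega> (Inl v)) -` {True} \<inter> space (nm_space p q)"
    by auto
  also have "measure (nm_space p q) \<dots> = measure (distr (nm_space p q) (NMf p q (Inl v)) (\<lambda>\<omega>. \<omega> (Inl v))) {True}"
    by (rule measure_distr[symmetric]) (auto simp: nm_space_eq sets_NMf measurable_component_singleton)
  also have "distr (nm_space p q) (NMf p q (Inl v)) (\<lambda>\<omega>. \<omega> (Inl v)) = NMf p q (Inl v)"
    unfolding nm_space_eq by (rule distr_PiM_component[OF NMf_prob]) simp
  also have "measure \<dots> {True} = q" using assms by (simp add: NMf_def measure_pmf_single)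
  finally show ?thesis .
qed

lemma maj_prob_01: "0 \<le> maj_prob k x" "maj_prob k x \<le> 1"
  unfolding maj_prob_def by auto

lemma root_red_prob_iter:
  assumes "0 \<le> p" "p \<le> 1" "0 \<le> q" "q \<le> 1"
  shows "root_red_prob k p q t = (Fhat_map p k ^^ t) q"
proof -
  have "\<forall>v. measure (nm_space p q) {\<omega> \<in> space (nm_space p q). nm_state k \<omega> t v} = (Fhat_map p k ^^ t) q
        \<and> 0 \<le> (Fhat_map p k ^^ t) q \<and> (Fhat_map p k ^^ t) q \<le> 1"
  proof (induction t)
    case 0 then show ?case using coord_prob assms by simp
  next
    case (Suc t)
    let ?r = "(Fhat_map p k ^^ t) q"
    have "measure (nm_space p q) {\<omega> \<in> space (nm_space p q). nm_state k \<omega> (Suc t) v} = (1 - p) * maj_prob k ?r" for v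
      by (rule nm_step) (use Suc assms in auto)
    moreover have "0 \<le> (1 - p) * maj_prob k ?r" "(1 - p) * maj_prob k ?r \<le> 1"
      using assms maj_prob_01[of k ?r] by (auto intro: mult_le_one)
    moreover have "(Fhat_map p k ^^ Suc t) q = (1 - p) * maj_prob k ?r"
      by (simp only: funpow.simps o_apply Fhat_map_def[of p k ?r])
    ultimately show ?case by presburger
  qed
  then show ?thesis unfolding root_red_prob_def by blast
qed



definition bb :: "nat \<Rightarrow> nat \<Rightarrow> real \<Rightarrow> real" where
  "bb n j x = real (n choose j) * x ^ j * (1 - x) ^ (n - j)"

definition TT :: "nat \<Rightarrow> nat \<Rightarrow> real \<Rightarrow> real" where
  "TT n a x = (\<Sum>j\<in>{a..n}. bb n j x)"

lemma bb_Suc: "bb (Suc n) (Suc j) x = x * bb n j x + (1 - x) * bb n (Suc j) x"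
proof (cases "j < n")
  case True
  then have e: "(1 - x) ^ (n - j) = (1 - x) * (1 - x) ^ (n - Suc j)"
    by (metis Suc_diff_Suc power_Suc)
  have "bb (Suc n) (Suc j) x = (real (n choose j) + real (n choose Suc j)) * x ^ Suc j * (1 - x) ^ (n - j)"
    by (simp add: bb_def)
  also have "\<dots> = x * bb n j x + (1 - x) * bb n (Suc j) x"
    unfolding bb_def e by (simp add: algebra_simps)
  finally show ?thesis .
next
  case False
  then show ?thesis unfolding bb_def
    by (cases "j = n") (auto simp: binomial_eq_0)
qed

lemma bb_gt: "n < j \<Longrightarrow> bb n j x = 0"
  unfolding bb_def by (simp add: binomial_eq_0)

lemma TT_empty: "n < a \<Longrightarrow> TT n a x = 0"
  unfolding TT_def by simp

lemma TT_Suc: "TT (Suc n) (Suc a) x = x * TT n a x + (1 - x) * TT n (Suc a) x"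
proof (cases "a \<le> n")
  case True
  have "TT (Suc n) (Suc a) x = (\<Sum>i\<in>{a..n}. bb (Suc n) (Suc i) x)"
    unfolding TT_def by (rule sum.shift_bounds_cl_Suc_ivl)
  also have "\<dots> = x * (\<Sum>i\<in>{a..n}. bb n i x) + (1 - x) * (\<Sum>i\<in>{a..n}. bb n (Suc i) x)"
    by (simp add: bb_Suc sum.distrib sum_distrib_left)
  also have "(\<Sum>i\<in>{a..n}. bb n (Suc i) x) = (\<Sum>i\<in>{Suc a..Suc n}. bb n i x)"
    by (rule sum.shift_bounds_cl_Suc_ivl[symmetric])
  also have "\<dots> = (\<Sum>i\<in>{Suc a..n}. bb n i x) + bb n (Suc n) x"
    using True by (simp add: sum.cl_ivl_Suc)
  also have "\<dots> = TT n (Suc a) x" by (simp add: bb_gt TT_def)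
  finally show ?thesis unfolding TT_def by simp
next
  case False then show ?thesis by (simp add: TT_empty)
qed

lemma TT_0: "TT n 0 x = 1"
proof -
  have "(x + (1 - x)) ^ n = (\<Sum>j\<le>n. real (n choose j) * x ^ j * (1 - x) ^ (n - j))"
    by (rule binomial_ring)
  then show ?thesis unfolding TT_def bb_def by (simp add: atLeast0AtMost)
qed

lemma TT_diff: "TT n a x = bb n a x + TT n (Suc a) x"
proof (cases "a \<le> n")
  case True then show ?thesis unfolding TT_def by (simp add: sum.atLeast_Suc_atMost)
next
  case False then show ?thesis by (simp add: TT_empty bb_gt)
qed

lemma TT_deriv: "((TT (Suc n) (Suc a)) has_real_derivative (real (Suc n) * bb n a x)) (at x)"
proof (induction n arbitrary: a x)
  case 0
  show ?case
  proof (cases a)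
    case 0
    have "TT (Suc 0) (Suc 0) = (\<lambda>x. x)" by (rule ext) (simp add: TT_def bb_def)
    then show ?thesis using 0 by (simp add: bb_def)
  next
    case (Suc a')
    have "TT (Suc 0) (Suc a) = (\<lambda>x. 0)" using Suc by (intro ext TT_empty) simp
    then show ?thesis using Suc by (simp add: bb_def)
  qed
next
  case (Suc n)
  show ?case
  proof (cases a)
    case 0
    have eq: "TT (Suc (Suc n)) (Suc 0) = (\<lambda>x. 1 - (1 - x) ^ Suc (Suc n))"
    proof
      fix x show "TT (Suc (Suc n)) (Suc 0) x = 1 - (1 - x) ^ Suc (Suc n)"
        using TT_diff[of "Suc (Suc n)" 0 x] TT_0[of "Suc (Suc n)" x] by (simp add: bb_def)
    qed
    have "((\<lambda>x. 1 - (1 - x) ^ Suc (Suc n)) has_real_derivative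
        (0 - of_nat (Suc (Suc n)) * ((0 - 1) * (1 - x) ^ (Suc (Suc n) - Suc 0)))) (at x)"
      by (intro derivative_intros DERIV_power)
    then show ?thesis unfolding eq 0 by (simp add: bb_def)
  next
    case (Suc a')
    have eq: "TT (Suc (Suc n)) (Suc a) = (\<lambda>x. x * TT (Suc n) (Suc a') x + (1 - x) * TT (Suc n) (Suc a) x)"
      using Suc by (intro ext) (simp add: TT_Suc)
    have d: "((\<lambda>x. x * TT (Suc n) (Suc a') x + (1 - x) * TT (Suc n) (Suc a) x) has_real_derivative
        (TT (Suc n) (Suc a') x + x * (real (Suc n) * bb n a' x)
         - TT (Suc n) (Suc a) x + (1 - x) * (real (Suc n) * bb n a x))) (at x)"
      by (auto intro!: derivative_eq_intros Suc.IH)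
    have h1: "TT (Suc n) (Suc a') x - TT (Suc n) (Suc a) x = bb (Suc n) a x"
      using TT_diff[of "Suc n" "Suc a'" x] Suc by simp
    have h2: "bb (Suc n) a x = x * bb n a' x + (1 - x) * bb n a x"
      using bb_Suc Suc by simp
    have h3: "x * (real (Suc n) * bb n a' x) + (1 - x) * (real (Suc n) * bb n a x)
        = real (Suc n) * (x * bb n a' x + (1 - x) * bb n a x)"
      by (simp add: algebra_simps)
    have "TT (Suc n) (Suc a') x + x * (real (Suc n) * bb n a' x)
         - TT (Suc n) (Suc a) x + (1 - x) * (real (Suc n) * bb n a x)
         = (TT (Suc n) (Suc a') x - TT (Suc n) (Suc a) x) + (x * (real (Suc n) * bb n a' x) + (1 - x) * (real (Suc n) * bb n a x))"
      by simp
    also have "\<dots> = bb (Suc n) a x + real (Suc n) * bb (Suc n) a x"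
      unfolding h1 h3 h2 ..
    also have "\<dots> = real (Suc (Suc n)) * bb (Suc n) a x" by (simp add: algebra_simps)
    finally have "TT (Suc n) (Suc a') x + x * (real (Suc n) * bb n a' x)
         - TT (Suc n) (Suc a) x + (1 - x) * (real (Suc n) * bb n a x)
         = real (Suc (Suc n)) * bb (Suc n) a x" .
    then show ?thesis using d unfolding eq by simp
  qed
qed



definition BB :: "nat \<Rightarrow> real \<Rightarrow> real" where "BB m x = TT (2*m+1) (m+1) x"
definition DD :: "nat \<Rightarrow> real \<Rightarrow> real" where "DD m x = real (2*m+1) * bb (2*m) m x"
definition hh :: "nat \<Rightarrow> real \<Rightarrow> real" where "hh m x = x * DD m x - BB m x"
definition gg :: "nat \<Rightarrow> real \<Rightarrow> real" where "gg m x = BB m x / x"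

lemma BB_deriv: "(BB m has_real_derivative DD m x) (at x)"
  using TT_deriv[of "2*m" m x] unfolding BB_def DD_def
  by (simp add: fun_eq_iff)

lemma BB_cont: "isCont (BB m) x"
  using BB_deriv by (rule DERIV_isCont)

lemma DD_eq: "DD m x = real (2*m+1) * real ((2*m) choose m) * (x * (1 - x)) ^ m"
  unfolding DD_def bb_def by (simp add: power_mult_distrib mult.assoc)

lemma DD_cont: "isCont (DD m) x"
  unfolding DD_eq[abs_def] by (intro continuous_intros)

lemma DD_pos: "0 < x \<Longrightarrow> x < 1 \<Longrightarrow> 0 < DD m x"
  unfolding DD_eq by (intro mult_pos_pos zero_less_power) auto

lemma DD_nonneg: "0 \<le> x \<Longrightarrow> x \<le> 1 \<Longrightarrow> 0 \<le> DD m x"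
  unfolding DD_eq by (intro mult_nonneg_nonneg zero_le_power) auto

lemma DD_1: "m \<ge> 1 \<Longrightarrow> DD m 1 = 0"
  unfolding DD_eq by simp

lemma xx_mono: "0 \<le> x \<Longrightarrow> x < y \<Longrightarrow> y \<le> 1/2 \<Longrightarrow> x * (1 - x) < y * (1 - (y::real))"
proof -
  assume a: "0 \<le> x" "x < y" "y \<le> 1/2"
  have "y * (1 - y) - x * (1 - x) = (y - x) * (1 - x - y)" by (simp add: algebra_simps)
  also have "\<dots> > 0" using a by (intro mult_pos_pos) auto
  finally show ?thesis by simp
qed

lemma xx_anti: "1/2 \<le> x \<Longrightarrow> x < y \<Longrightarrow> y \<le> 1 \<Longrightarrow> y * (1 - y) < x * (1 - (x::real))"
proof -
  assume a: "1/2 \<le> x" "x < y" "y \<le> 1"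
  have "x * (1 - x) - y * (1 - y) = (y - x) * (x + y - 1)" by (simp add: algebra_simps)
  also have "\<dots> > 0" using a by (intro mult_pos_pos) auto
  finally show ?thesis by simp
qed

lemma DD_mono: "m \<ge> 1 \<Longrightarrow> 0 \<le> x \<Longrightarrow> x < y \<Longrightarrow> y \<le> 1/2 \<Longrightarrow> DD m x < DD m y"
proof -
  assume a: "m \<ge> 1" "0 \<le> x" "x < y" "y \<le> 1/2"
  have "(x * (1 - x)) ^ m < (y * (1 - y)) ^ m"
    using a xx_mono[of x y] by (intro power_strict_mono) auto
  moreover have "0 < real (2*m+1) * real ((2*m) choose m)" by simp
  ultimately show ?thesis unfolding DD_eq by simp
qed

lemma DD_anti: "m \<ge> 1 \<Longrightarrow> 1/2 \<le> x \<Longrightarrow> x < y \<Longrightarrow> y \<le> 1 \<Longrightarrow> DD m y < DD m x"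
proof -
  assume a: "m \<ge> 1" "1/2 \<le> x" "x < y" "y \<le> 1"
  have "(y * (1 - y)) ^ m < (x * (1 - x)) ^ m"
    using a xx_anti[of x y] by (intro power_strict_mono) auto
  moreover have "0 < real (2*m+1) * real ((2*m) choose m)" by simp
  ultimately show ?thesis unfolding DD_eq by simp
qed

lemma BB_0: "BB m 0 = 0"
  unfolding BB_def TT_def bb_def by simp

lemma BB_1: "BB m 1 = 1"
proof -
  have "BB m 1 = (\<Sum>j\<in>{m+1..2*m+1}. if j = 2*m+1 then 1 else 0)"
    unfolding BB_def TT_def bb_def by (rule sum.cong) auto
  also have "\<dots> = 1" by simp
  finally show ?thesis .
qed

lemma BB_MVT: "a < b \<Longrightarrow> \<exists>z. a < z \<and> z < b \<and> BB m b - BB m a = (b - a) * DD m z"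
  using MVT2[of a b "BB m" "DD m"] BB_deriv by blast

lemma BB_strict_mono: "0 \<le> a \<Longrightarrow> a < b \<Longrightarrow> b \<le> 1 \<Longrightarrow> BB m a < BB m b"
proof -
  assume a: "0 \<le> a" "a < b" "b \<le> 1"
  obtain z where z: "a < z" "z < b" "BB m b - BB m a = (b - a) * DD m z"
    using BB_MVT[of a b m] a(2) by blast
  have "0 < DD m z" using z a by (intro DD_pos) auto
  then have "0 < (b - a) * DD m z" using a by simp
  then show ?thesis using z(3) by linarith
qed

lemma BB_mono: "0 \<le> a \<Longrightarrow> a \<le> b \<Longrightarrow> b \<le> 1 \<Longrightarrow> BB m a \<le> BB m b"
proof -
  assume a: "0 \<le> a" "a \<le> b" "b \<le> 1"
  show ?thesis
  proof (cases "a = b")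
    case False then show ?thesis using BB_strict_mono[of a b m] a by simp
  qed simp
qed

lemma BB_01: "0 \<le> x \<Longrightarrow> x \<le> 1 \<Longrightarrow> 0 \<le> BB m x \<and> BB m x \<le> 1"
proof -
  assume a: "0 \<le> x" "x \<le> 1"
  have "BB m 0 \<le> BB m x" by (rule BB_mono) (use a in auto)
  moreover have "BB m x \<le> BB m 1" by (rule BB_mono) (use a in auto)
  ultimately show ?thesis by (simp add: BB_0 BB_1)
qed

lemma hh_pos: "m \<ge> 1 \<Longrightarrow> 0 < x \<Longrightarrow> x \<le> 1/2 \<Longrightarrow> 0 < hh m x"
proof -
  assume a: "m \<ge> 1" "0 < x" "x \<le> 1/2"
  obtain z where z: "0 < z" "z < x" "BB m x - BB m 0 = (x - 0) * DD m z"
    using BB_MVT[of 0 x m] a by auto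
  have "DD m z < DD m x" using DD_mono[of m z x] a z by auto
  then have "x * DD m z < x * DD m x" using a by simp
  moreover have "BB m x = x * DD m z" using z(3) by (simp add: BB_0)
  ultimately show ?thesis unfolding hh_def by linarith
qed

lemma hh_anti: "m \<ge> 1 \<Longrightarrow> 1/2 \<le> x \<Longrightarrow> x < y \<Longrightarrow> y \<le> 1 \<Longrightarrow> hh m y < hh m x"
proof -
  assume a: "m \<ge> 1" "1/2 \<le> x" "x < y" "y \<le> 1"
  obtain z where z: "x < z" "z < y" "BB m y - BB m x = (y - x) * DD m z"
    using BB_MVT[of x y m] a by auto
  have d1: "DD m y < DD m x" using DD_anti[of m x y] a by auto
  have d2: "DD m y < DD m z" using DD_anti[of m z y] a z by auto
  have "hh m y - hh m x = x * (DD m y - DD m x) + (y - x) * (DD m y - DD m z)"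
    unfolding hh_def using z(3) by (simp add: algebra_simps)
  moreover have "x * (DD m y - DD m x) < 0" using a d1 by (intro mult_pos_neg) auto
  moreover have "(y - x) * (DD m y - DD m z) < 0" using a d2 by (intro mult_pos_neg) auto
  ultimately show ?thesis by linarith
qed

lemma hh_1: "m \<ge> 1 \<Longrightarrow> hh m 1 = -1"
  unfolding hh_def by (simp add: DD_1 BB_1)

lemma hh_cont: "isCont (hh m) x"
  unfolding hh_def[abs_def] using BB_cont DD_cont by (intro continuous_intros) auto

definition c0 :: "nat \<Rightarrow> real" where "c0 m = (SOME c. 1/2 < c \<and> c < 1 \<and> hh m c = 0)"

lemma c0_prop: assumes "m \<ge> 1" shows "1/2 < c0 m" "c0 m < 1" "hh m (c0 m) = 0"
proof -
  have "\<exists>c. 1/2 \<le> c \<and> c \<le> 1 \<and> hh m c = 0"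
    using assms hh_1[OF assms] hh_pos[OF assms, of "1/2"]
    by (intro IVT2) (auto intro: hh_cont)
  then obtain c where c: "1/2 \<le> c" "c \<le> 1" "hh m c = 0" by blast
  have "c \<noteq> 1/2"
  proof
    assume "c = 1/2"
    then have "hh m c = hh m (1/2)" by (simp only:)
    then show False using c(3) hh_pos[OF assms, of "1/2"] by linarith
  qed
  moreover have "c \<noteq> 1" using c hh_1[OF assms] by auto
  ultimately have "\<exists>c. 1/2 < c \<and> c < 1 \<and> hh m c = 0" using c by (intro exI[of _ c]) auto
  then have "1/2 < c0 m \<and> c0 m < 1 \<and> hh m (c0 m) = 0"
    unfolding c0_def by (rule someI_ex)
  then show "1/2 < c0 m" "c0 m < 1" "hh m (c0 m) = 0" by auto
qed

lemma hh_sign_pos: "m \<ge> 1 \<Longrightarrow> 0 < x \<Longrightarrow> x < c0 m \<Longrightarrow> 0 < hh m x"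
proof -
  assume a: "m \<ge> 1" "0 < x" "x < c0 m"
  show ?thesis
  proof (cases "x \<le> 1/2")
    case True then show ?thesis using hh_pos a by auto
  next
    case False
    then show ?thesis using hh_anti[of m x "c0 m"] c0_prop[OF a(1)] a by auto
  qed
qed

lemma hh_sign_neg: "m \<ge> 1 \<Longrightarrow> c0 m < x \<Longrightarrow> x \<le> 1 \<Longrightarrow> hh m x < 0"
  using hh_anti[of m "c0 m" x] c0_prop[of m] by auto



lemma BB_step: "BB (Suc m) x = BB m x + real ((2*m+1) choose m) * x^(m+1) * (1-x)^(m+1) * (2*x - 1)"
proof -
  define n where "n = 2*m+1"
  have e0: "BB (Suc m) x = TT (Suc (Suc n)) (Suc (Suc m)) x" unfolding BB_def n_def by simp
  have e1: "TT (Suc (Suc n)) (Suc (Suc m)) x = x * TT (Suc n) (Suc m) x + (1 - x) * TT (Suc n) (Suc (Suc m)) x"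
    by (rule TT_Suc)
  have e2: "TT (Suc n) (Suc m) x = x * TT n m x + (1 - x) * TT n (Suc m) x" by (rule TT_Suc)
  have e3: "TT (Suc n) (Suc (Suc m)) x = x * TT n (Suc m) x + (1 - x) * TT n (Suc (Suc m)) x" by (rule TT_Suc)
  have e4: "TT n m x = bb n m x + TT n (Suc m) x" by (rule TT_diff)
  have e5: "TT n (Suc m) x = bb n (Suc m) x + TT n (Suc (Suc m)) x" by (rule TT_diff)
  have B: "BB m x = TT n (Suc m) x" unfolding BB_def n_def by simp
  have C: "n choose Suc m = n choose m" unfolding n_def
    using binomial_symmetric[of m "2*m+1"] by simp
  have u: "bb n m x = real (n choose m) * x^m * (1-x)^(m+1)" unfolding bb_def n_def by simp
  have w: "bb n (Suc m) x = real (n choose m) * x^(m+1) * (1-x)^m" unfolding bb_def using C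
    by (simp add: n_def)
  have "BB (Suc m) x = BB m x + x^2 * bb n m x - (1-x)^2 * bb n (Suc m) x"
    unfolding e0 e1 e2 e3 e4 B using e5 by (simp add: algebra_simps power2_eq_square)
  moreover have "x^2 * bb n m x - (1-x)^2 * bb n (Suc m) x = real (n choose m) * x^(m+1) * (1-x)^(m+1) * (2*x - 1)"
    unfolding u w by (simp add: algebra_simps power2_eq_square)
  ultimately show ?thesis unfolding n_def by simp
qed

lemma BB_34: "m \<ge> 1 \<Longrightarrow> BB m (3/4) \<ge> 27/32"
proof (induction m rule: dec_induct)
  case base
  have c32: "(3::nat) choose 2 = 3" by (simp add: numeral_3_eq_3 numeral_2_eq_2)
  have "BB 1 (3/4) = TT 3 2 (3/4)" by (simp add: BB_def numeral_2_eq_2 numeral_3_eq_3)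
  also have "\<dots> = bb 3 2 (3/4) + bb 3 3 (3/4) + TT 3 4 (3/4)"
    using TT_diff[of 3 2 "3/4"] TT_diff[of 3 3 "3/4"] by (simp add: numeral_3_eq_3 numeral_2_eq_2 eval_nat_numeral)
  also have "TT 3 4 (3/4) = 0" by (rule TT_empty) simp
  also have "bb 3 2 (3/4) = 27/64" by (simp add: bb_def c32 power2_eq_square)
  also have "bb 3 3 (3/4) = 27/64" by (simp add: bb_def power3_eq_cube)
  finally show ?case by simp
next
  case (step m)
  have "0 \<le> real ((2*m+1) choose m) * (3/4::real)^(m+1) * (1-3/4)^(m+1) * (2*(3/4) - 1)"
    by simp
  then show ?case using step BB_step[of m "3/4"] by linarith
qed



lemma gg_deriv: "x \<noteq> 0 \<Longrightarrow> (gg m has_real_derivative hh m x / x^2) (at x)"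
proof -
  assume x: "x \<noteq> 0"
  have "((\<lambda>x. BB m x / x) has_real_derivative (DD m x * x - BB m x * 1) / (x * x)) (at x)"
    by (rule DERIV_divide[OF BB_deriv DERIV_ident x])
  then show ?thesis unfolding gg_def[abs_def] hh_def by (simp add: power2_eq_square algebra_simps)
qed

lemma gg_cont_on: "0 < a \<Longrightarrow> continuous_on {a..b} (gg m)"
  by (rule continuous_at_imp_continuous_on) (auto intro!: DERIV_isCont gg_deriv)

lemma gg_inc: "m \<ge> 1 \<Longrightarrow> 0 < x \<Longrightarrow> x < y \<Longrightarrow> y \<le> c0 m \<Longrightarrow> gg m x < gg m y"
proof -
  assume a: "m \<ge> 1" "0 < x" "x < y" "y \<le> c0 m"
  show ?thesis
  proof (rule DERIV_pos_imp_increasing_open[OF a(3)])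
    fix z assume z: "x < z" "z < y"
    have "0 < hh m z" using hh_sign_pos[of m z] a z by auto
    then show "\<exists>d. (gg m has_real_derivative d) (at z) \<and> 0 < d"
      using gg_deriv[of z m] z a by (intro exI[of _ "hh m z / z^2"]) auto
  next
    show "continuous_on {x..y} (gg m)" using a by (intro gg_cont_on)
  qed
qed

lemma gg_dec: "m \<ge> 1 \<Longrightarrow> c0 m \<le> x \<Longrightarrow> x < y \<Longrightarrow> y \<le> 1 \<Longrightarrow> gg m y < gg m x"
proof -
  assume a: "m \<ge> 1" "c0 m \<le> x" "x < y" "y \<le> 1"
  have c: "1/2 < c0 m" using c0_prop a by auto
  show ?thesis
  proof (rule DERIV_neg_imp_decreasing_open[OF a(3)])
    fix z assume z: "x < z" "z < y"
    have "hh m z < 0" using hh_sign_neg[of m z] a z by auto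
    moreover have "0 < z^2" using z a c by auto
    ultimately show "\<exists>d. (gg m has_real_derivative d) (at z) \<and> d < 0"
      using gg_deriv[of z m] z a c by (intro exI[of _ "hh m z / z^2"]) (auto simp: divide_neg_pos)
  next
    show "continuous_on {x..y} (gg m)" using a c by (intro gg_cont_on) auto
  qed
qed

definition MM :: "nat \<Rightarrow> real" where "MM m = gg m (c0 m)"

lemma gg_1: "gg m 1 = 1" unfolding gg_def by (simp add: BB_1)

lemma gg_lt_M: "m \<ge> 1 \<Longrightarrow> 0 < x \<Longrightarrow> x \<le> 1 \<Longrightarrow> x \<noteq> c0 m \<Longrightarrow> gg m x < MM m"
proof -
  assume a: "m \<ge> 1" "0 < x" "x \<le> 1" "x \<noteq> c0 m"
  have c: "1/2 < c0 m" "c0 m < 1" using c0_prop a by auto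
  show ?thesis
  proof (cases "x < c0 m")
    case True then show ?thesis unfolding MM_def using gg_inc a by auto
  next
    case False then show ?thesis unfolding MM_def using gg_dec[of m "c0 m" x] a by auto
  qed
qed

lemma M_lt_2: "m \<ge> 1 \<Longrightarrow> MM m < 2"
proof -
  assume a: "m \<ge> 1"
  have c: "1/2 < c0 m" "c0 m < 1" using c0_prop a by auto
  have "BB m (c0 m) \<le> 1" using BB_01[of "c0 m" m] c by auto
  then have "BB m (c0 m) / c0 m \<le> 1 / c0 m" using c by (intro divide_right_mono) auto
  also have "1 / c0 m < 2" using c by (simp add: field_simps)
  finally show ?thesis unfolding MM_def gg_def .
qed

lemma M_ge: "m \<ge> 1 \<Longrightarrow> 9/8 \<le> MM m"
proof -
  assume a: "m \<ge> 1"
  have "9/8 \<le> gg m (3/4)" unfolding gg_def using BB_34[OF a] by simp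
  also have "gg m (3/4) \<le> MM m"
  proof (cases "3/4 = c0 m")
    case True then show ?thesis unfolding MM_def by (metis order_refl)
  next
    case False then show ?thesis using gg_lt_M[OF a, of "3/4"] by simp
  qed
  finally show ?thesis .
qed

lemma gg_small: "m \<ge> 1 \<Longrightarrow> 0 < l \<Longrightarrow> \<exists>x. 0 < x \<and> x < c0 m \<and> gg m x < l"
proof -
  assume a: "m \<ge> 1" "0 < l"
  define K where "K = real (2*m+1) * real ((2*m) choose m)"
  have K: "0 < K" unfolding K_def by simp
  define x where "x = min (1/4) (l / (2*K))"
  have x: "0 < x" "x \<le> 1/4" "x \<le> l / (2*K)" unfolding x_def using a K by auto
  have c: "1/2 < c0 m" using c0_prop a by auto
  have "0 < hh m x" using hh_pos[OF a(1), of x] x by auto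
  then have "BB m x < DD m x * x" unfolding hh_def by (simp add: mult.commute)
  then have g: "gg m x < DD m x" unfolding gg_def using x(1) by (simp add: pos_divide_less_eq)
  have xx: "0 \<le> x * (1 - x)" "x * (1 - x) \<le> 1" using x by (auto simp: mult_le_one)
  have "(x * (1 - x)) ^ m \<le> (x * (1 - x)) ^ 1"
    using xx a by (intro power_decreasing) auto
  moreover have "x * (1 - x) \<le> x" using x by (simp add: mult_le_cancel_left1)
  ultimately have p: "(x * (1 - x)) ^ m \<le> x" by simp
  have "DD m x = K * (x * (1 - x)) ^ m" unfolding DD_eq K_def by simp
  also have "\<dots> \<le> K * x" using p K by (intro mult_left_mono) auto
  also have "K * x \<le> K * (l / (2*K))" using x K by (intro mult_left_mono) auto
  also have "K * (l / (2*K)) = l / 2" using K by simp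
  finally have "DD m x \<le> l / 2" .
  then have "gg m x < l" using g a by linarith
  then show ?thesis using x c by (intro exI[of _ x]) auto
qed



lemma c0_bounds: "m \<ge> 1 \<Longrightarrow> 1/2 < c0 m \<and> c0 m < 1" using c0_prop by auto

lemma lev_two:
  assumes m: "m \<ge> 1" and l: "1 \<le> l" "l < MM m"
  shows "\<exists>a b. 0 < a \<and> a < b \<and> b \<le> 1
     \<and> (\<forall>x. 0 < x \<and> x < a \<longrightarrow> gg m x < l)
     \<and> (\<forall>x. a < x \<and> x < b \<longrightarrow> l < gg m x)
     \<and> (\<forall>x. b < x \<and> x \<le> 1 \<longrightarrow> gg m x < l)
     \<and> gg m a = l \<and> gg m b = l"
proof -
  have c: "1/2 < c0 m" "c0 m < 1" using c0_bounds[OF m] by auto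
  obtain x0 where x0: "0 < x0" "x0 < c0 m" "gg m x0 < l" using gg_small[OF m, of l] l by auto
  have "\<exists>a. x0 \<le> a \<and> a \<le> c0 m \<and> gg m a = l"
    using x0 l by (intro IVT') (auto simp: MM_def intro: gg_cont_on)
  then obtain a where a: "x0 \<le> a" "a \<le> c0 m" "gg m a = l" by blast
  have "a \<noteq> c0 m" using a l unfolding MM_def by auto
  with a have a': "a < c0 m" by simp
  have "\<exists>b. c0 m \<le> b \<and> b \<le> 1 \<and> gg m b = l"
    using l c by (intro IVT2') (auto simp: MM_def gg_1 intro: gg_cont_on)
  then obtain b where b: "c0 m \<le> b" "b \<le> 1" "gg m b = l" by blast
  have "b \<noteq> c0 m" using b l unfolding MM_def by auto
  with b have b': "c0 m < b" by simp
  have s1: "\<forall>x. 0 < x \<and> x < a \<longrightarrow> gg m x < l"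
    using gg_inc[OF m] a a' by auto
  have s2: "\<forall>x. a < x \<and> x < b \<longrightarrow> l < gg m x"
  proof (intro allI impI)
    fix x assume x: "a < x \<and> x < b"
    show "l < gg m x"
    proof (cases "x \<le> c0 m")
      case True then show ?thesis using gg_inc[OF m, of a x] a x0 x by auto
    next
      case False then show ?thesis using gg_dec[OF m, of x b] b x by auto
    qed
  qed
  have s3: "\<forall>x. b < x \<and> x \<le> 1 \<longrightarrow> gg m x < l"
    using gg_dec[OF m, of b] b b' by auto
  show ?thesis
    using s1 s2 s3 a a' b b' x0 by (intro exI[of _ a] exI[of _ b]) auto
qed

lemma lev_one:
  assumes m: "m \<ge> 1" and x: "0 < x" "x \<le> 1"
  shows "gg m x = MM m \<longleftrightarrow> x = c0 m"
proof
  assume e: "gg m x = MM m"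
  show "x = c0 m"
  proof (rule ccontr)
    assume "x \<noteq> c0 m"
    then have "gg m x < MM m" by (rule gg_lt_M[OF m x])
    then show False using e by simp
  qed
next
  assume "x = c0 m" then show "gg m x = MM m" unfolding MM_def by simp
qed

lemma lev_none:
  assumes m: "m \<ge> 1" and x: "0 < x" "x \<le> 1" and l: "MM m < l"
  shows "gg m x < l"
proof -
  have "gg m x \<le> MM m" using gg_lt_M[OF m x] unfolding MM_def by (cases "x = c0 m") auto
  then show ?thesis using l by simp
qed



lemma maj_BB: "k = 2*m+1 \<Longrightarrow> 0 \<le> x \<Longrightarrow> x \<le> 1 \<Longrightarrow> maj_prob k x = BB m x"
proof -
  assume k: "k = 2*m+1" and x: "0 \<le> x" "x \<le> 1"
  have "maj_prob k x = (\<Sum>c\<in>{c. c \<le> k \<and> k + 1 \<le> 2 * c}. real (k choose c) * x ^ c * (1 - x) ^ (k - c))"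
    by (rule maj_prob_sum[OF x])
  also have "{c. c \<le> k \<and> k + 1 \<le> 2 * c} = {m+1..k}" using k by auto
  also have "(\<Sum>c\<in>{m+1..k}. real (k choose c) * x ^ c * (1 - x) ^ (k - c)) = BB m x"
    by (simp only: BB_def TT_def bb_def k)
  finally show ?thesis .
qed

lemma Fhat_eq: "k = 2*m+1 \<Longrightarrow> 0 \<le> x \<Longrightarrow> x \<le> 1 \<Longrightarrow> Fhat_map p k x = (1-p) * BB m x"
  unfolding Fhat_map_def by (subst maj_BB[of k m]) auto

lemma Fhat_diff: "k = 2*m+1 \<Longrightarrow> 0 < x \<Longrightarrow> x \<le> 1 \<Longrightarrow> p \<noteq> 1 \<Longrightarrow>
   Fhat_map p k x - x = (1-p) * x * (gg m x - 1/(1-p))"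
proof -
  assume k: "k = 2*m+1" and a: "0 < x" "x \<le> 1" "p \<noteq> 1"
  have gen: "\<And>l. (1-p) * x * (gg m x - l) = (1-p) * (x * gg m x) - x * ((1-p) * l)"
    by (simp add: algebra_simps)
  have "(1-p) * x * (gg m x - 1/(1-p)) = (1-p) * (x * gg m x) - x * ((1-p) * (1/(1-p)))"
    by (rule gen)
  also have "(1-p) * (1/(1-p)) = 1" using a by simp
  also have "x * gg m x = BB m x" unfolding gg_def using a by simp
  finally have e: "(1-p) * x * (gg m x - 1/(1-p)) = (1-p) * BB m x - x" by simp
  have "Fhat_map p k x = (1-p) * BB m x" by (rule Fhat_eq[OF k]) (use a in auto)
  then show ?thesis using e by simp
qed

lemma Fhat_lt: "k = 2*m+1 \<Longrightarrow> 0 \<le> p \<Longrightarrow> p < 1 \<Longrightarrow> 0 < x \<Longrightarrow> x \<le> 1 \<Longrightarrow>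
   (Fhat_map p k x < x \<longleftrightarrow> gg m x < 1/(1-p))"
proof -
  assume k: "k = 2*m+1" and a: "0 \<le> p" "p < 1" "0 < x" "x \<le> 1"
  have pos: "0 < (1-p) * x" using a by simp
  have d: "Fhat_map p k x - x = (1-p) * x * (gg m x - 1/(1-p))"
    using Fhat_diff[OF k, of x p] a by simp
  have "Fhat_map p k x < x \<longleftrightarrow> (1-p) * x * (gg m x - 1/(1-p)) < 0"
    by (subst d[symmetric]) simp
  also have "\<dots> \<longleftrightarrow> (1-p) * x * (gg m x - 1/(1-p)) < (1-p) * x * 0" by simp
  also have "\<dots> \<longleftrightarrow> gg m x - 1/(1-p) < 0" by (rule mult_less_cancel_left_pos[OF pos])
  finally show ?thesis by simp
qed

lemma Fhat_gt: "k = 2*m+1 \<Longrightarrow> 0 \<le> p \<Longrightarrow> p < 1 \<Longrightarrow> 0 < x \<Longrightarrow> x \<le> 1 \<Longrightarrow>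
   (x < Fhat_map p k x \<longleftrightarrow> 1/(1-p) < gg m x)"
proof -
  assume k: "k = 2*m+1" and a: "0 \<le> p" "p < 1" "0 < x" "x \<le> 1"
  have pos: "0 < (1-p) * x" using a by simp
  have d: "Fhat_map p k x - x = (1-p) * x * (gg m x - 1/(1-p))"
    using Fhat_diff[OF k, of x p] a by simp
  have "x < Fhat_map p k x \<longleftrightarrow> 0 < (1-p) * x * (gg m x - 1/(1-p))"
    by (subst d[symmetric]) simp
  also have "\<dots> \<longleftrightarrow> (1-p) * x * 0 < (1-p) * x * (gg m x - 1/(1-p))" by simp
  also have "\<dots> \<longleftrightarrow> 0 < gg m x - 1/(1-p)" by (rule mult_less_cancel_left_pos[OF pos])
  finally show ?thesis by simp
qed

lemma Fhat_fix_iff: "k = 2*m+1 \<Longrightarrow> 0 \<le> p \<Longrightarrow> p < 1 \<Longrightarrow> 0 < x \<Longrightarrow> x \<le> 1 \<Longrightarrow>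
   (Fhat_map p k x = x \<longleftrightarrow> gg m x = 1/(1-p))"
  using Fhat_lt[of k m p x] Fhat_gt[of k m p x] by (metis linorder_neqE_linordered_idom order_less_irrefl)

lemma Fhat_0: "k = 2*m+1 \<Longrightarrow> Fhat_map p k 0 = 0"
  by (subst Fhat_eq[of k m]) (auto simp: BB_0)

definition pst :: "nat \<Rightarrow> real" where "pst m = 1 - 1 / MM m"

lemma MM_pos: "m \<ge> 1 \<Longrightarrow> 1 < MM m" using M_ge[of m] by simp

lemma pst_bounds: "m \<ge> 1 \<Longrightarrow> 1/9 \<le> pst m \<and> pst m < 1/2"
proof -
  assume m: "m \<ge> 1"
  have a: "9/8 \<le> MM m" "MM m < 2" using M_ge[OF m] M_lt_2[OF m] by auto
  have "1 / MM m \<le> 8/9" using a by (simp add: field_simps)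
  moreover have "1/2 < 1 / MM m" using a by (simp add: field_simps)
  ultimately show ?thesis unfolding pst_def by simp
qed

lemma lam_lt: "m \<ge> 1 \<Longrightarrow> p < 1 \<Longrightarrow> (p < pst m \<longleftrightarrow> 1/(1-p) < MM m)"
  using MM_pos[of m] unfolding pst_def by (simp add: field_simps)

lemma lam_eq: "m \<ge> 1 \<Longrightarrow> p < 1 \<Longrightarrow> (p = pst m \<longleftrightarrow> 1/(1-p) = MM m)"
  using MM_pos[of m] unfolding pst_def by (auto simp: field_simps)

lemma lam_gt: "m \<ge> 1 \<Longrightarrow> p < 1 \<Longrightarrow> (pst m < p \<longleftrightarrow> MM m < 1/(1-p))"
  using MM_pos[of m] unfolding pst_def by (simp add: field_simps)

lemma lam_ge1: "0 \<le> (p::real) \<Longrightarrow> p < 1 \<Longrightarrow> 1 \<le> 1/(1-p)"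
proof -
  assume a: "0 \<le> p" "p < 1"
  have "(1 - p) * 1 \<le> 1" using a by simp
  then show ?thesis using a by (simp add: le_divide_eq)
qed



lemma fixHat_below:
  assumes k: "k = 2*m+1" and m: "m \<ge> 1" and p: "0 \<le> p" "p < pst m"
  shows "\<exists>a b. 0 < a \<and> a < b \<and> b \<le> 1 \<and> fixpts_Fhat p k = {0, a, b}
     \<and> (\<forall>x. 0 < x \<and> x < a \<longrightarrow> Fhat_map p k x < x)
     \<and> (\<forall>x. a < x \<and> x < b \<longrightarrow> x < Fhat_map p k x)
     \<and> (\<forall>x. b < x \<and> x \<le> 1 \<longrightarrow> Fhat_map p k x < x)"
proof -
  have p1: "p < 1" using p pst_bounds[OF m] by auto
  define l where "l = 1/(1-p)"
  have l: "1 \<le> l" "l < MM m" unfolding l_def using lam_ge1[OF p(1) p1] lam_lt[OF m p1] p by auto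
  obtain a b where ab: "0 < a" "a < b" "b \<le> 1"
     "\<forall>x. 0 < x \<and> x < a \<longrightarrow> gg m x < l"
     "\<forall>x. a < x \<and> x < b \<longrightarrow> l < gg m x"
     "\<forall>x. b < x \<and> x \<le> 1 \<longrightarrow> gg m x < l"
     "gg m a = l" "gg m b = l"
    using lev_two[OF m l] by blast
  have lt: "Fhat_map p k x < x \<longleftrightarrow> gg m x < l" if "0 < x" "x \<le> 1" for x
    unfolding l_def using Fhat_lt[OF k p(1) p1 that] .
  have gt: "x < Fhat_map p k x \<longleftrightarrow> l < gg m x" if "0 < x" "x \<le> 1" for x
    unfolding l_def using Fhat_gt[OF k p(1) p1 that] .
  have eq: "Fhat_map p k x = x \<longleftrightarrow> gg m x = l" if "0 < x" "x \<le> 1" for x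
    unfolding l_def using Fhat_fix_iff[OF k p(1) p1 that] .
  have fx: "fixpts_Fhat p k = {0, a, b}"
  proof (rule set_eqI)
    fix x
    show "x \<in> fixpts_Fhat p k \<longleftrightarrow> x \<in> {0, a, b}"
    proof (cases "x = 0")
      case True then show ?thesis unfolding fixpts_Fhat_def using Fhat_0[OF k] by auto
    next
      case False
      show ?thesis
      proof
        assume "x \<in> fixpts_Fhat p k"
        then have x: "0 < x" "x \<le> 1" "Fhat_map p k x = x" using False unfolding fixpts_Fhat_def by auto
        then have g: "gg m x = l" using eq by auto
        have "\<not> (x < a)" using ab(4) g x by auto
        moreover have "\<not> (a < x \<and> x < b)" using ab(5) g x by auto
        moreover have "\<not> (b < x)" using ab(6) g x by auto
        ultimately show "x \<in> {0, a, b}" by auto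
      next
        assume "x \<in> {0, a, b}"
        then have "x = a \<or> x = b" using False by auto
        then show "x \<in> fixpts_Fhat p k"
          unfolding fixpts_Fhat_def using eq ab by auto
      qed
    qed
  qed
  show ?thesis
    apply (rule exI[of _ a], rule exI[of _ b])
    using ab fx lt gt by auto
qed

lemma fixHat_at:
  assumes k: "k = 2*m+1" and m: "m \<ge> 1"
  shows "fixpts_Fhat (pst m) k = {0, c0 m}"
proof -
  define p where "p = pst m"
  have p: "0 \<le> p" "p < 1" using pst_bounds[OF m] unfolding p_def by auto
  have l: "1/(1-p) = MM m" using lam_eq[OF m p(2)] unfolding p_def by simp
  have c: "1/2 < c0 m" "c0 m < 1" using c0_bounds[OF m] by auto
  have "fixpts_Fhat p k = {0, c0 m}"
  proof (rule set_eqI)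
    fix x
    show "x \<in> fixpts_Fhat p k \<longleftrightarrow> x \<in> {0, c0 m}"
    proof (cases "x = 0")
      case True then show ?thesis unfolding fixpts_Fhat_def using Fhat_0[OF k] by auto
    next
      case False
      then have "x \<in> fixpts_Fhat p k \<longleftrightarrow> (0 < x \<and> x \<le> 1 \<and> Fhat_map p k x = x)"
        unfolding fixpts_Fhat_def by auto
      also have "\<dots> \<longleftrightarrow> (0 < x \<and> x \<le> 1 \<and> gg m x = MM m)"
        using Fhat_fix_iff[OF k p, of x] l by auto
      also have "\<dots> \<longleftrightarrow> x = c0 m" using lev_one[OF m, of x] c by auto
      finally show ?thesis using False by auto
    qed
  qed
  then show ?thesis unfolding p_def .
qed

lemma fixHat_above:
  assumes k: "k = 2*m+1" and m: "m \<ge> 1" and p: "pst m < p" "p \<le> 1"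
  shows "(\<forall>x. 0 < x \<and> x \<le> 1 \<longrightarrow> Fhat_map p k x < x) \<and> fixpts_Fhat p k = {0}"
proof -
  have p0: "0 \<le> p" using p pst_bounds[OF m] by auto
  have lt: "\<forall>x. 0 < x \<and> x \<le> 1 \<longrightarrow> Fhat_map p k x < x"
  proof (cases "p = 1")
    case True then show ?thesis by (auto simp: Fhat_eq[OF k])
  next
    case False
    then have p1: "p < 1" using p by simp
    have l: "MM m < 1/(1-p)" using lam_gt[OF m p1] p by simp
    show ?thesis using Fhat_lt[OF k p0 p1] lev_none[OF m _ _ l] by auto
  qed
  moreover have "fixpts_Fhat p k = {0}"
    unfolding fixpts_Fhat_def using lt Fhat_0[OF k]
    by (auto simp: order_less_irrefl) (metis less_eq_real_def order_less_irrefl)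
  ultimately show ?thesis by blast
qed

lemma fixF_image:
  assumes p: "0 \<le> p" "p < 1"
  shows "fixpts_F p k = (\<lambda>y. y / (1 - p)) ` fixpts_Fhat p k"
proof (rule set_eqI, rule iffI)
  fix x assume "x \<in> fixpts_F p k"
  then have x: "0 \<le> x" "x \<le> 1" "maj_prob k ((1-p)*x) = x" unfolding fixpts_F_def F_map_def by auto
  define y where "y = (1-p)*x"
  have y: "0 \<le> y" "y \<le> 1" unfolding y_def using x p by (auto intro: mult_le_one)
  have "Fhat_map p k y = y" unfolding Fhat_map_def y_def using x by simp
  then have "y \<in> fixpts_Fhat p k" using y unfolding fixpts_Fhat_def by auto
  moreover have "x = y / (1 - p)" unfolding y_def using p by simp
  ultimately show "x \<in> (\<lambda>y. y / (1 - p)) ` fixpts_Fhat p k" by blast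
next
  fix x assume "x \<in> (\<lambda>y. y / (1 - p)) ` fixpts_Fhat p k"
  then obtain y where y: "0 \<le> y" "y \<le> 1" "(1-p) * maj_prob k y = y" "x = y / (1-p)"
    unfolding fixpts_Fhat_def Fhat_map_def by auto
  have "x = ((1-p) * maj_prob k y) / (1-p)" using y(3,4) by simp
  then have xm: "x = maj_prob k y" using p by simp
  have "(1-p) * x = y" using y p by simp
  then have "F_map p k x = x" unfolding F_map_def using xm by simp
  moreover have "0 \<le> x" "x \<le> 1" using xm maj_prob_01 by auto
  ultimately show "x \<in> fixpts_F p k" unfolding fixpts_F_def by auto
qed

lemma card_fixF:
  assumes p: "0 \<le> p" "p < 1"
  shows "card (fixpts_F p k) = card (fixpts_Fhat p k)"
proof -
  have "inj_on (\<lambda>y. y / (1 - p)) (fixpts_Fhat p k)"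
    using p by (auto simp: inj_on_def)
  then show ?thesis unfolding fixF_image[OF p] by (rule card_image)
qed

lemma fixF_1: "k = 2*m+1 \<Longrightarrow> fixpts_F 1 k = {0}"
  unfolding fixpts_F_def F_map_def using maj_BB[of k m 0] BB_0 by auto

lemma card3: "0 < a \<Longrightarrow> a < b \<Longrightarrow> card {0, a, b::real} = 3" by auto
lemma card2: "0 < a \<Longrightarrow> card {0, a::real} = 2" by auto

lemma pstar_eq:
  assumes k: "k = 2*m+1" and m: "m \<ge> 1"
  shows "pstar k = pst m"
proof -
  let ?P = "\<lambda>ps. 1/9 \<le> ps \<and> ps < 1/2
      \<and> (\<forall>p. 0 \<le> p \<and> p < ps \<longrightarrow> card (fixpts_F p k) = 3)
      \<and> card (fixpts_F ps k) = 2
      \<and> (\<forall>p. ps < p \<and> p \<le> 1 \<longrightarrow> fixpts_F p k = {0})"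
  have b: "1/9 \<le> pst m" "pst m < 1/2" using pst_bounds[OF m] by auto
  have below: "card (fixpts_F p k) = 3" if h: "0 \<le> p" "p < pst m" for p
  proof -
    have p1: "p < 1" using h b by simp
    obtain a b where "0 < a" "a < b" "fixpts_Fhat p k = {0, a, b}"
      using fixHat_below[OF k m h] by blast
    then show ?thesis using card_fixF[OF h(1) p1] card3 by simp
  qed
  have at: "card (fixpts_F (pst m) k) = 2"
  proof -
    have "0 < c0 m" using c0_bounds[OF m] by simp
    then show ?thesis using card_fixF[of "pst m" k] b fixHat_at[OF k m] card2 by simp
  qed
  have above: "fixpts_F p k = {0}" if "pst m < p" "p \<le> 1" for p
  proof (cases "p = 1")
    case True then show ?thesis using fixF_1[OF k] by simp
  next
    case False
    then have p: "0 \<le> p" "p < 1" using that b by auto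
    show ?thesis unfolding fixF_image[OF p] using fixHat_above[OF k m that] by simp
  qed
  have P: "?P (pst m)" using b below at above by blast
  have "(THE ps. ?P ps) = pst m"
  proof (rule the_equality)
    show "?P (pst m)" by (rule P)
  next
    fix ps assume ps: "?P ps"
    show "ps = pst m"
    proof (rule ccontr)
      assume "ps \<noteq> pst m"
      then consider "ps < pst m" | "pst m < ps" by linarith
      then show False
      proof cases
        case 1
        then have "card (fixpts_F ps k) = 3" using below ps by auto
        then show False using ps by simp
      next
        case 2
        then have "card (fixpts_F (pst m) k) = 3" using ps b by auto
        then show False using at by simp
      qed
    qed
  qed
  then show ?thesis unfolding pstar_def .
qed



lemma conv_down:
  fixes f :: "real \<Rightarrow> real"
  assumes mono: "\<And>x y. 0 \<le> x \<Longrightarrow> x \<le> y \<Longrightarrow> y \<le> 1 \<Longrightarrow> f x \<le> f y"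
    and cont: "continuous_on {0..1} f"
    and fL: "f L = L" and L: "0 \<le> L" and x0: "L \<le> x0" "x0 \<le> 1"
    and below: "\<And>x. L < x \<Longrightarrow> x \<le> x0 \<Longrightarrow> f x < x"
  shows "(\<lambda>n. (f ^^ n) x0) \<longlonglongrightarrow> L"
proof -
  define s where "s n = (f ^^ n) x0" for n
  have step: "L \<le> s (Suc n) \<and> s (Suc n) \<le> s n" if a: "L \<le> s n" "s n \<le> x0" for n
  proof -
    have sS: "s (Suc n) = f (s n)" unfolding s_def by simp
    have "L \<le> f (s n)" using mono[of L "s n"] fL L a x0 by simp
    moreover have "f (s n) \<le> s n"
      using below[of "s n"] fL a by (cases "L = s n") auto
    ultimately show ?thesis using sS by simp
  qed
  have inv0: "L \<le> s n \<and> s n \<le> x0" for n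
  proof (induction n)
    case 0 then show ?case using x0 by (simp add: s_def)
  next
    case (Suc n) then show ?case using step[of n] by auto
  qed
  have inv: "L \<le> s n \<and> s n \<le> x0 \<and> s (Suc n) \<le> s n" for n
    using inv0[of n] step[of n] by auto
  have dec: "decseq s" using inv by (intro decseq_SucI) auto
  obtain l where l: "s \<longlonglongrightarrow> l" "\<forall>i. l \<le> s i"
    using decseq_convergent[OF dec, of L] inv by blast
  have lL: "L \<le> l" using l(1) inv by (intro LIMSEQ_le_const) auto
  have "l \<le> s 0" using l(2) by blast
  then have lx: "l \<le> x0" by (simp add: s_def)
  have "(\<lambda>n. f (s n)) \<longlonglongrightarrow> f l"
    by (rule continuous_on_tendsto_compose[OF cont l(1)]) (use lL lx L x0 inv in \<open>auto intro!: always_eventually order_trans[OF L] order_trans[OF _ x0(2)]\<close>)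
  moreover have "(\<lambda>n. f (s n)) = (\<lambda>n. s (Suc n))" unfolding s_def by simp
  moreover have "(\<lambda>n. s (Suc n)) \<longlonglongrightarrow> l" using l(1) by (rule LIMSEQ_Suc)
  ultimately have "f l = l" using LIMSEQ_unique by metis
  then have "l = L" using below[of l] lL lx by force
  then show ?thesis using l(1) unfolding s_def by simp
qed

lemma conv_up:
  fixes f :: "real \<Rightarrow> real"
  assumes mono: "\<And>x y. 0 \<le> x \<Longrightarrow> x \<le> y \<Longrightarrow> y \<le> 1 \<Longrightarrow> f x \<le> f y"
    and cont: "continuous_on {0..1} f"
    and fU: "f U = U" and U: "U \<le> 1" and x0: "0 \<le> x0" "x0 \<le> U"
    and above: "\<And>x. x0 \<le> x \<Longrightarrow> x < U \<Longrightarrow> x < f x"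
  shows "(\<lambda>n. (f ^^ n) x0) \<longlonglongrightarrow> U"
proof -
  define s where "s n = (f ^^ n) x0" for n
  have step: "s (Suc n) \<le> U \<and> s n \<le> s (Suc n)" if a: "x0 \<le> s n" "s n \<le> U" for n
  proof -
    have sS: "s (Suc n) = f (s n)" unfolding s_def by simp
    have "f (s n) \<le> U" using mono[of "s n" U] fU U a x0 by simp
    moreover have "s n \<le> f (s n)"
      using above[of "s n"] fU a by (cases "U = s n") auto
    ultimately show ?thesis using sS by simp
  qed
  have inv0: "x0 \<le> s n \<and> s n \<le> U" for n
  proof (induction n)
    case 0 then show ?case using x0 by (simp add: s_def)
  next
    case (Suc n) then show ?case using step[of n] by auto
  qed
  have inv: "x0 \<le> s n \<and> s n \<le> U \<and> s n \<le> s (Suc n)" for n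
    using inv0[of n] step[of n] by auto
  have inc: "incseq s" using inv by (intro incseq_SucI) auto
  obtain l where l: "s \<longlonglongrightarrow> l" "\<forall>i. s i \<le> l"
    using incseq_convergent[OF inc, of U] inv by blast
  have lU: "l \<le> U" using l(1) inv by (intro LIMSEQ_le_const2) auto
  have "s 0 \<le> l" using l(2) by blast
  then have lx: "x0 \<le> l" by (simp add: s_def)
  have "(\<lambda>n. f (s n)) \<longlonglongrightarrow> f l"
    by (rule continuous_on_tendsto_compose[OF cont l(1)]) (use lU lx U x0 inv in \<open>auto intro!: always_eventually order_trans[OF x0(1)] order_trans[OF _ U]\<close>)
  moreover have "(\<lambda>n. f (s n)) = (\<lambda>n. s (Suc n))" unfolding s_def by simp
  moreover have "(\<lambda>n. s (Suc n)) \<longlonglongrightarrow> l" using l(1) by (rule LIMSEQ_Suc)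
  ultimately have "f l = l" using LIMSEQ_unique by metis
  then have "l = U" using above[of l] lU lx by force
  then show ?thesis using l(1) unfolding s_def by simp
qed

lemma Fhat_mono: "k = 2*m+1 \<Longrightarrow> p \<le> 1 \<Longrightarrow> 0 \<le> x \<Longrightarrow> x \<le> y \<Longrightarrow> y \<le> 1 \<Longrightarrow> Fhat_map p k x \<le> Fhat_map p k y"
  using Fhat_eq[of k m x p] Fhat_eq[of k m y p] BB_mono[of x y m] by (simp add: mult_left_mono)

lemma Fhat_cont: "k = 2*m+1 \<Longrightarrow> continuous_on {0..1} (Fhat_map p k)"
proof -
  assume k: "k = 2*m+1"
  have "continuous_on {0..1} (\<lambda>x. (1-p) * BB m x)"
    using BB_cont by (intro continuous_intros continuous_at_imp_continuous_on) auto
  then show ?thesis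
    by (rule continuous_on_cong[THEN iffD1, rotated 2]) (auto simp: Fhat_eq[OF k])
qed

lemma sorted3: "0 < a \<Longrightarrow> a < b \<Longrightarrow> sorted_list_of_set {0, a, b::real} = [0, a, b]"
  by (subst sorted_list_of_set_unique[symmetric]) auto



theorem theorem4p6:
  fixes k :: nat and p q :: real
  assumes "odd k" and "k \<ge> 3"
    and "0 \<le> p" and "p \<le> 1" and "0 \<le> q" and "q \<le> 1"
  shows "(p < pstar k \<and> q > phi_minus p k \<longrightarrow>
            (root_red_prob k p q \<longlonglongrightarrow> phi_plus p k))
       \<and> (p < pstar k \<and> q < phi_minus p k \<longrightarrow>
            (root_red_prob k p q \<longlonglongrightarrow> 0))
       \<and> (p > pstar k \<longrightarrow> (root_red_prob k p q \<longlonglongrightarrow> 0))"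
proof -
  define m where "m = k div 2"
  have k: "k = 2*m+1" unfolding m_def using assms(1) by presburger
  have m: "m \<ge> 1" using assms(2) k by simp
  have ps: "pstar k = pst m" by (rule pstar_eq[OF k m])
  have rr: "root_red_prob k p q = (\<lambda>t. (Fhat_map p k ^^ t) q)"
    using root_red_prob_iter[OF assms(3-6)] by (intro ext) simp
  let ?f = "Fhat_map p k"
  have mono: "\<And>x y. 0 \<le> x \<Longrightarrow> x \<le> y \<Longrightarrow> y \<le> 1 \<Longrightarrow> ?f x \<le> ?f y"
    using Fhat_mono[OF k assms(4)] by blast
  have cont: "continuous_on {0..1} ?f" by (rule Fhat_cont[OF k])
  have f0: "?f 0 = 0" by (rule Fhat_0[OF k])
  have c1: "root_red_prob k p q \<longlonglongrightarrow> phi_plus p k" if h: "p < pstar k" "q > phi_minus p k"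
  proof -
    obtain a b where ab: "0 < a" "a < b" "b \<le> 1" "fixpts_Fhat p k = {0, a, b}"
       "\<forall>x. 0 < x \<and> x < a \<longrightarrow> ?f x < x"
       "\<forall>x. a < x \<and> x < b \<longrightarrow> x < ?f x"
       "\<forall>x. b < x \<and> x \<le> 1 \<longrightarrow> ?f x < x"
      using fixHat_below[OF k m assms(3)] h ps by auto
    have pm: "phi_minus p k = a" "phi_plus p k = b"
      unfolding phi_minus_def phi_plus_def ab(4) sorted3[OF ab(1,2)] by simp_all
    have fb: "?f b = b" using ab(4) unfolding fixpts_Fhat_def by blast
    have qa: "a < q" using h pm by simp
    show ?thesis
    proof (cases "q \<le> b")
      case True
      show ?thesis unfolding rr pm
        by (rule conv_up[OF mono cont fb ab(3)]) (use True qa ab(1,6) in auto)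
    next
      case False
      show ?thesis unfolding rr pm
        by (rule conv_down[OF mono cont fb]) (use False assms(6) ab(1,2,7) in auto)
    qed
  qed
  have c2: "root_red_prob k p q \<longlonglongrightarrow> 0" if h: "p < pstar k" "q < phi_minus p k"
  proof -
    obtain a b where ab: "0 < a" "a < b" "b \<le> 1" "fixpts_Fhat p k = {0, a, b}"
       "\<forall>x. 0 < x \<and> x < a \<longrightarrow> ?f x < x"
      using fixHat_below[OF k m assms(3)] h ps by auto
    have pm: "phi_minus p k = a"
      unfolding phi_minus_def ab(4) sorted3[OF ab(1,2)] by simp
    show ?thesis unfolding rr
      by (rule conv_down[OF mono cont f0]) (use h pm assms(5,6) ab(5) in auto)
  qed
  have c3: "root_red_prob k p q \<longlonglongrightarrow> 0" if h: "p > pstar k"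
  proof -
    have lt: "\<forall>x. 0 < x \<and> x \<le> 1 \<longrightarrow> ?f x < x"
      using fixHat_above[OF k m _ assms(4)] h ps by auto
    show ?thesis unfolding rr
      by (rule conv_down[OF mono cont f0]) (use lt assms(5,6) in auto)
  qed
  show ?thesis using c1 c2 c3 by blast
qed


end
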